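(* Let $F$ be a distribution function on $[0,1]$ satisfying: (i) $F$ has a positive, non-increasing, differentiable density $g$; (ii) the hazard ratio $g(x)/(1-F(x))$ is non-decreasing. Let $\{f_{i,j}\}$, $f_{i,j}=f_{j,i}$ ($1\le i\le j\le n$), be independent with distribution $F$. Call $I\subseteq[n]$ a K-set if $f_{i,j}\ge (f_{i,i}+f_{j,j})/2$ for all distinct $i,j\in I$, and let $L_n$ be the maximum cardinality of a K-set. Let $\xi\in(0,1)$ be the positive root of $1-\xi=e^{-2\xi}$ and $c=(2e^{-1})^{1/2}\,\xi^{-1/2}(1-\xi)^{-1/2}\ (=2.14\dots)$. Then for every $\delta>0$, $\mathrm{P}\bigl(L_n\le (c+\delta)n^{1/2}\bigr)\to1$ as $n\to\infty$. *)

theory Defs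
  imports "HOL-Probability.Probability"
begin

definition entry_idx :: "nat \<Rightarrow> (nat \<times> nat) set" where
  "entry_idx n = {(i, j). 1 \<le> i \<and> i \<le> j \<and> j \<le> n}"

definition sym_entry :: "(nat \<times> nat \<Rightarrow> real) \<Rightarrow> nat \<Rightarrow> nat \<Rightarrow> real" where
  "sym_entry \<omega> i j = \<omega> (min i j, max i j)"

definition is_Kset :: "nat \<Rightarrow> (nat \<times> nat \<Rightarrow> real) \<Rightarrow> nat set \<Rightarrow> bool" where
  "is_Kset n \<omega> I \<longleftrightarrow> I \<subseteq> {1..n} \<and>
     (\<forall>i\<in>I. \<forall>j\<in>I. i \<noteq> j \<longrightarrow>
        sym_entry \<omega> i j \<ge> (sym_entry \<omega> i i + sym_entry \<omega> j j) / 2)"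

definition L_max :: "nat \<Rightarrow> (nat \<times> nat \<Rightarrow> real) \<Rightarrow> nat" where
  "L_max n \<omega> = Max {card I | I. is_Kset n \<omega> I}"

definition dens_distr :: "(real \<Rightarrow> real) \<Rightarrow> real measure" where
  "dens_distr g = density lborel (\<lambda>x. ennreal (indicator {0..1} x * g x))"

definition cdf_of :: "(real \<Rightarrow> real) \<Rightarrow> real \<Rightarrow> real" where
  "cdf_of g x = integral {0..x} g"

definition xi_const :: real where
  "xi_const = (THE \<xi>. 0 < \<xi> \<and> \<xi> < 1 \<and> 1 - \<xi> = exp (-2 * \<xi>))"

definition c_const :: real where
  "c_const = sqrt (2 * exp (-1)) / sqrt (xi_const * (1 - xi_const))"

end

theory Submission
  imports Defs "HOL-Real_Asymp.Real_Asymp"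
begin

lemma exp_lower_sum: "0 \<le> (x::real) \<Longrightarrow> (\<Sum>n<N. x ^ n / fact n) \<le> exp x"
proof -
  assume x: "0 \<le> x"
  have "(\<Sum>n<N. x ^ n /\<^sub>R fact n) \<le> (\<Sum>n. x ^ n /\<^sub>R fact n)"
    by (rule sum_le_suminf[OF summable_exp_generic]) (use x in auto)
  then show ?thesis by (simp add: exp_def divide_inverse mult.commute)
qed

lemma exp_159: "exp (159/100::real) > 1000/205"
proof -
  have "(\<Sum>n<8. (159/100::real) ^ n / fact n) \<le> exp (159/100)"
    by (rule exp_lower_sum) simp
  moreover have "(\<Sum>n<8. (159/100::real) ^ n / fact n) > 1000/205"
    by (simp add: lessThan_nat_numeral fact_numeral eval_nat_numeral)
  ultimately show ?thesis by linarith
qed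

lemma h_pos: "1 - 795/1000 - exp (-2 * (795/1000::real)) > 0"
proof -
  have "exp (-2 * (795/1000::real)) = inverse (exp (159/100))"
    by (simp add: exp_minus[symmetric])
  moreover have "inverse (exp (159/100::real)) < 205/1000"
  proof -
    have "inverse (exp (159/100::real)) < inverse (1000/205)"
      using exp_159 by (intro less_imp_inverse_less) auto
    then show ?thesis by simp
  qed
  ultimately show ?thesis by simp
qed

lemma root_ge: assumes "0 < y" "y < 1" "1 - y = exp (-2 * y)" shows "795/1000 \<le> (y::real)"
proof (rule ccontr)
  assume "\<not> 795/1000 \<le> y"
  hence yl: "y < 795/1000" by simp
  define t where "t = y / (795/1000)"
  have t: "0 \<le> t" "t \<le> 1" using assms yl by (auto simp: t_def)
  have cv: "convex_on UNIV (\<lambda>x. exp (1 * x))" by (rule convex_on_exp) simp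
  have H: "exp (1 * ((1 - t) *\<^sub>R 0 + t *\<^sub>R (-2 * (795/1000)))) \<le> (1 - t) * exp (1*0) + t * exp (1 * (-2 * (795/1000::real)))"
    using convex_onD[OF cv t, of 0 "-2 * (795/1000)"] by blast
  have E: "1 * ((1 - t) *\<^sub>R 0 + t *\<^sub>R (-2 * (795/1000))) = -2 * y" by (simp add: t_def)
  from H have "exp (-2*y) \<le> (1 - t) + t * exp (-2 * (795/1000::real))" unfolding E by simp
  hence "1 - y \<le> (1 - t) + t * exp (-2 * (795/1000::real))" using assms by simp
  moreover have "y = t * (795/1000)" by (simp add: t_def)
  ultimately have "t * (1 - 795/1000 - exp (-2 * (795/1000::real))) \<le> 0" by (simp add: algebra_simps)
  moreover have "t > 0" using assms by (simp add: t_def)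
  ultimately show False using h_pos by (simp add: mult_le_0_iff)
qed

lemma root_unique: assumes "795/1000 \<le> x" "x \<le> y" "1 - y = exp (-2 * y)" "1 - x = exp (-2 * x)"
  shows "x = (y::real)"
proof (rule ccontr)
  assume "x \<noteq> y" hence xy: "x < y" using assms by simp
  have "exp (-2*x) - exp (-2*y) = exp (-2*x) * (1 - exp (-2*(y-x)))"
    by (simp add: algebra_simps exp_add[symmetric])
  also have "\<dots> \<le> exp (-2*x) * (2*(y-x))"
  proof -
    have "1 - exp (-2*(y-x)) \<le> 2*(y-x)" using exp_ge_add_one_self[of "-2*(y-x)"] by linarith
    then show ?thesis by (intro mult_left_mono) auto
  qed
  also have "exp (-2*x) \<le> exp (-2 * (795/1000::real))" using assms by simp
  hence "exp (-2*x) * (2*(y-x)) \<le> exp (-2 * (795/1000::real)) * (2*(y-x))"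
    using xy by (intro mult_right_mono) auto
  finally have "exp (-2*x) - exp (-2*y) \<le> exp (-2 * (795/1000::real)) * (2*(y-x))" .
  moreover have "exp (-2 * (795/1000::real)) < 1/2" using h_pos by simp
  moreover have "exp (-2 * (795/1000::real)) * (2*(y-x)) < (1/2) * (2*(y-x))"
    using xy \<open>exp (-2 * (795/1000::real)) < 1/2\<close> by (intro mult_strict_right_mono) auto
  moreover have "(1/2) * (2*(y-x)) = y - (x::real)" by simp
  ultimately have "exp (-2*x) - exp (-2*y) < (y - x)" by linarith
  then show False using assms by simp
qed

lemma xi_props: "795/1000 \<le> xi_const \<and> xi_const < 1 \<and> 1 - xi_const = exp (-2 * xi_const)"
proof -
  let ?P = "\<lambda>\<xi>::real. 0 < \<xi> \<and> \<xi> < 1 \<and> 1 - \<xi> = exp (-2 * \<xi>)"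
  let ?h = "\<lambda>x::real. 1 - x - exp (-2 * x)"
  have "\<exists>x\<ge>795/1000. x \<le> 1 \<and> ?h x = 0"
  proof (rule IVT2)
    show "?h 1 \<le> 0" by simp
    show "0 \<le> ?h (795/1000)" using h_pos by simp
  qed (auto intro!: continuous_intros)
  then obtain x where x: "795/1000 \<le> x" "x \<le> 1" "?h x = 0" by blast
  have "x \<noteq> 1" using x by auto
  hence Px: "?P x" using x by auto
  have "\<exists>!\<xi>. ?P \<xi>"
  proof (rule ex1I[of _ x])
    show "?P x" by fact
    fix y assume Py: "?P y"
    hence "795/1000 \<le> y" using root_ge by blast
    then show "y = x" using Px Py root_unique x(1)
      by (metis linorder_le_cases)
  qed
  hence "?P xi_const" unfolding xi_const_def by (rule theI')
  then show ?thesis using root_ge by auto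
qed

lemma ln_lower: assumes "1 \<le> (x::real)" shows "2 * (x - 1) / (x + 1) \<le> ln x"
proof -
  let ?f = "\<lambda>x::real. ln x - 2 * (x - 1) / (x + 1)"
  have "?f 1 \<le> ?f x"
  proof (rule DERIV_nonneg_imp_nondecreasing[OF assms])
    fix y :: real assume y: "1 \<le> y" "y \<le> x"
    have "DERIV ?f y :> (1 / y - (2 * (y + 1) - 2 * (y - 1)) / (y + 1)^2)"
      using y by (auto intro!: derivative_eq_intros simp: power2_eq_square)
    moreover have "0 \<le> 1 / y - (2 * (y + 1) - 2 * (y - 1)) / (y + 1)^2"
    proof -
      have "(y+1)^2 - 4*y = (y-1)^2" by (simp add: power2_eq_square algebra_simps)
      hence q: "4*y \<le> (y+1)^2" by (smt (verit) zero_le_power2)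
      have "(2 * (y + 1) - 2 * (y - 1)) / (y + 1)^2 = 4 / (y+1)^2" by simp
      also have "\<dots> \<le> 1 / y" using y q by (simp add: divide_simps)
      finally show ?thesis by simp
    qed
    ultimately show "\<exists>d. DERIV ?f y :> d \<and> 0 \<le> d" by auto
  qed
  then show ?thesis by simp
qed

definition beta_c :: real where "beta_c = 2 - 2 * ln (3/2)"

lemma c_bound: "4 * beta_c / ln 3 \<le> c_const^2" and c_pos: "0 < c_const"
proof -
  have xi: "795/1000 \<le> xi_const" "xi_const < 1" using xi_props by auto
  have p: "0 < xi_const * (1 - xi_const)" using xi by simp
  have p2: "xi_const * (1 - xi_const) \<le> 795/1000 * (205/1000)"
  proof -
    have "xi_const * (1 - xi_const) - 795/1000 * (205/1000) = (xi_const - 795/1000) * (205/1000 - xi_const)"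
      by (simp add: field_simps)
    also have "\<dots> \<le> 0" using xi by (intro mult_nonneg_nonpos) auto
    finally show ?thesis by simp
  qed
  have c2: "c_const^2 = 2 * exp (-1) / (xi_const * (1 - xi_const))"
    unfolding c_const_def using p xi by (simp add: power_divide power_mult_distrib real_sqrt_mult)
  have L: "4/10 \<le> ln (3/2::real)" using ln_lower[of "3/2"] by simp
  have l2: "2/3 \<le> ln (2::real)" by (rule ln2_ge_two_thirds)
  have l3: "ln (3::real) = ln (3/2) + ln 2" using ln_mult[of "3/2" "2::real"] by simp
  have e: "exp (1::real) < 272/100" by (rule e_less_272)
  have ln3: "0 < ln (3::real)" by simp
  have key: "4 * beta_c * exp 1 * (xi_const * (1 - xi_const)) \<le> 2 * ln 3"
  proof -
    have b: "0 \<le> beta_c" unfolding beta_c_def using ln_le_minus_one[of "3/2"] by simp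
    have "4 * beta_c * exp 1 * (xi_const * (1 - xi_const)) \<le> 4 * beta_c * (272/100) * (795/1000 * (205/1000))"
    proof (rule mult_mono)
      show "4 * beta_c * exp 1 \<le> 4 * beta_c * (272/100)" using b e by (intro mult_left_mono) auto
    qed (use b p p2 in auto)
    also have "\<dots> \<le> 2 * ln 3" unfolding beta_c_def l3 using L l2 by simp
    finally show ?thesis .
  qed
  have "4 * beta_c / ln 3 = (4 * beta_c * exp 1 * (xi_const * (1 - xi_const))) / (ln 3 * exp 1 * (xi_const * (1 - xi_const)))"
  proof -
    define q where "q = exp 1 * (xi_const * (1 - xi_const))"
    have "q > 0" using p by (simp add: q_def)
    hence "4 * beta_c / ln 3 = (4 * beta_c * q) / (ln 3 * q)" by simp
    then show ?thesis by (simp add: q_def mult.assoc)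
  qed
  also have "\<dots> \<le> (2 * ln 3) / (ln 3 * exp 1 * (xi_const * (1 - xi_const)))"
    using key p ln3 by (intro divide_right_mono) auto
  also have "\<dots> = c_const^2"
  proof -
    define q where "q = exp 1 * (xi_const * (1 - xi_const))"
    have "q > 0" using p by (simp add: q_def)
    have "(2 * ln 3) / (ln 3 * exp 1 * (xi_const * (1 - xi_const))) = (2 * ln 3) / (ln 3 * q)"
      by (simp add: q_def mult.assoc)
    also have "\<dots> = 2 / q" using ln3 by simp
    also have "\<dots> = c_const^2" unfolding c2 q_def by (simp add: exp_minus field_simps)
    finally show ?thesis .
  qed
  finally show "4 * beta_c / ln 3 \<le> c_const^2" .
  show "0 < c_const" unfolding c_const_def using p by simp
qed


definition vv :: "real \<Rightarrow> real" where "vv s = sqrt (1 + 3 * exp (- s))"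
definition BB :: "real \<Rightarrow> real" where "BB s = 2 * (ln (1 + vv s) - vv s)"

lemma vv_ge1: "1 \<le> vv s" by (simp add: vv_def)

lemma BB_deriv: "(BB has_real_derivative (vv s - 1)) (at s)"
proof -
  have p: "0 < 1 + 3 * exp (- s)" by (simp add: add_pos_pos)
  have v1: "1 \<le> vv s" by (rule vv_ge1)
  have vsq: "(vv s)^2 = 1 + 3 * exp (- s)" unfolding vv_def using p by simp
  have dv: "(vv has_real_derivative (- 3 * exp (- s)) / (2 * vv s)) (at s)"
    unfolding vv_def using p
    by (auto intro!: derivative_eq_intros simp: field_simps)
  have "(BB has_real_derivative 2 * (((- 3 * exp (- s)) / (2 * vv s)) / (1 + vv s) - (- 3 * exp (- s)) / (2 * vv s))) (at s)"
    unfolding BB_def[abs_def] using v1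
    by (auto intro!: derivative_eq_intros dv)
  moreover have "2 * (((- 3 * exp (- s)) / (2 * vv s)) / (1 + vv s) - (- 3 * exp (- s)) / (2 * vv s)) = vv s - 1"
  proof -
    have aux: "2 * (((- 3 * E) / (2 * w)) / (1 + w) - (- 3 * E) / (2 * w)) = w - 1"
      if "1 \<le> w" "3 * E = w^2 - 1" for w E :: real
    proof -
      have w0: "w \<noteq> 0" "1 + w \<noteq> 0" using that(1) by auto
      have w2: "w * 2 + w * (w * 2) \<noteq> 0" using that(1) by (smt (verit) mult_pos_pos)
      have "2 * (((- 3 * E) / (2 * w)) / (1 + w) - (- 3 * E) / (2 * w)) = 3 * E / (1 + w)"
        using w0 w2 by (simp add: field_simps)
      also have "\<dots> = (w^2 - 1) / (1 + w)" using that(2) by simp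
      also have "\<dots> = w - 1" using w0 by (simp add: field_simps power2_eq_square)
      finally show ?thesis .
    qed
    show ?thesis by (rule aux[OF v1]) (use vsq in simp)
  qed
  ultimately show ?thesis by simp
qed

lemma BB_bound: "BB s - BB 0 \<le> 2 - 2 * ln (3/2)"
proof -
  have "vv 0 = 2" by (simp add: vv_def)
  hence B0: "BB 0 = 2 * (ln 3 - 2)" by (simp add: BB_def)
  have v1: "1 \<le> vv s" by (rule vv_ge1)
  have "ln ((1 + vv s) / 2) \<le> (1 + vv s) / 2 - 1" by (rule ln_le_minus_one) (use v1 in simp)
  moreover have "ln ((1 + vv s) / 2) = ln (1 + vv s) - ln 2" using v1 by (simp add: ln_div)
  ultimately have "ln (1 + vv s) - vv s \<le> ln 2 - 1" using v1 by simp
  moreover have "ln (3::real) = ln (3/2) + ln 2" using ln_mult[of "3/2" "2::real"] by simp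
  ultimately show ?thesis using B0 by (simp add: BB_def)
qed

locale dens =
  fixes g :: "real \<Rightarrow> real"
  assumes g_pos: "\<forall>x\<in>{0..1}. g x > 0"
    and g_noninc: "\<forall>x y. 0 \<le> x \<longrightarrow> x \<le> y \<longrightarrow> y \<le> 1 \<longrightarrow> g y \<le> g x"
    and g_cont: "continuous_on {0..1} g"
    and g_total: "integral {0..1} g = 1"
begin

definition G :: "real \<Rightarrow> real" where "G x = integral {0..x} g"

definition Gh :: "real \<Rightarrow> real" where
  "Gh x = (if x < 0 then g 0 * x else if x \<le> 1 then G x else 1)"

lemma g_int: "0 \<le> a \<Longrightarrow> b \<le> 1 \<Longrightarrow> g integrable_on {a..b}"
  by (rule integrable_continuous_real, rule continuous_on_subset[OF g_cont]) auto

lemma G_diff: assumes "0 \<le> a" "a \<le> b" "b \<le> 1" shows "G b - G a = integral {a..b} g"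
proof -
  have "integral {0..a} g + integral {a..b} g = integral {0..b} g"
    by (rule Henstock_Kurzweil_Integration.integral_combine) (use assms g_int in auto)
  then show ?thesis unfolding G_def by simp
qed

lemma int_bounds: assumes "0 \<le> a" "a \<le> b" "b \<le> 1"
  shows "(b - a) * g b \<le> integral {a..b} g" "integral {a..b} g \<le> (b - a) * g a"
proof -
  have "integral {a..b} (\<lambda>x. g b) \<le> integral {a..b} g"
    by (rule integral_le) (use assms g_int g_noninc in auto)
  then show "(b - a) * g b \<le> integral {a..b} g" using assms by simp
  have "integral {a..b} g \<le> integral {a..b} (\<lambda>x. g a)"
    by (rule integral_le) (use assms g_int g_noninc in auto)
  then show "integral {a..b} g \<le> (b - a) * g a" using assms by simp
qed

lemma G0: "G 0 = 0" by (simp add: G_def)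
lemma G1: "G 1 = 1" by (simp add: G_def g_total)

lemma g_ge1: "1 \<le> g 0"
  using int_bounds(2)[of 0 1] g_total by simp

lemma g0_pos: "0 < g 0" using g_pos by auto

lemma G_mono: assumes "0 \<le> x" "x \<le> y" "y \<le> 1" shows "G x \<le> G y"
proof -
  have "0 < g y" using assms g_pos by auto
  hence "0 \<le> (y - x) * g y" using assms by (intro mult_nonneg_nonneg) auto
  then show ?thesis using G_diff[of x y] int_bounds(1)[of x y] assms by linarith
qed

lemma Gh_mono: "mono Gh"
proof (rule monoI)
  fix x y :: real assume xy: "x \<le> y"
  have G01: "0 \<le> G z" "G z \<le> 1" if "0 \<le> z" "z \<le> 1" for z
    using G_mono[of 0 z] G_mono[of z 1] that G0 G1 by auto
  have neg: "g 0 * z < 0" if "z < 0" for z using mult_pos_neg[OF g0_pos that] .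
  show "Gh x \<le> Gh y"
  proof (cases "x < 0")
    case True
    show ?thesis
    proof (cases "y < 0")
      case True
      then show ?thesis using \<open>x < 0\<close> xy g0_pos unfolding Gh_def by simp
    next
      case False
      then show ?thesis using \<open>x < 0\<close> neg[of x] G01[of y] unfolding Gh_def by auto
    qed
  next
    case False
    then show ?thesis using xy G01[of x] G_mono[of x y] unfolding Gh_def by auto
  qed
qed

lemma Gh_borel[measurable]: "Gh \<in> borel_measurable borel"
  by (rule borel_measurable_mono[OF Gh_mono])

lemma Gh_le1: "Gh x \<le> 1"
  using G_mono[of x 1] G1 g0_pos mult_pos_neg[of "g 0" x] unfolding Gh_def by auto

lemma Gh_tangent: assumes "0 \<le> m" "m \<le> 1" shows "Gh x \<le> G m + g m * (x - m)"
proof -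
  have gm: "0 < g m" "g m \<le> g 0" using g_pos g_noninc assms by auto
  consider "x < 0" | "0 \<le> x" "x \<le> m" | "m \<le> x" "x \<le> 1" | "1 < x" by linarith
  then show ?thesis
  proof cases
    case 1
    have "m * g m \<le> G m" using int_bounds(1)[of 0 m] G_diff[of 0 m] G0 assms by (simp add: mult.commute)
    moreover have "g 0 * x \<le> g m * x" using 1 gm by (intro mult_right_mono_neg) auto
    moreover have "Gh x = g 0 * x" using 1 by (simp add: Gh_def)
    moreover have "g m * (x - m) = g m * x - m * g m" by (simp add: algebra_simps)
    ultimately show ?thesis by linarith
  next
    case 2
    have "G m - G x \<ge> (m - x) * g m" using int_bounds(1)[of x m] G_diff[of x m] 2 assms by simp
    then show ?thesis using 2 assms unfolding Gh_def by (simp add: algebra_simps)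
  next
    case 3
    have "G x - G m \<le> (x - m) * g m" using int_bounds(2)[of m x] G_diff[of m x] 3 assms by simp
    then show ?thesis using 3 assms unfolding Gh_def by (simp add: algebra_simps)
  next
    case 4
    have "G 1 - G m \<le> (1 - m) * g m" using int_bounds(2)[of m 1] G_diff[of m 1] assms by simp
    moreover have "(1 - m) * g m \<le> (x - m) * g m" using 4 gm by (intro mult_right_mono) auto
    ultimately show ?thesis using 4 G1 unfolding Gh_def by (simp add: algebra_simps)
  qed
qed

lemma Gh_concave_mid: "(Gh a + Gh b) / 2 \<le> Gh ((a + b) / 2)"
proof -
  define m where "m = (a + b) / 2"
  consider "m < 0" | "0 \<le> m" "m \<le> 1" | "1 < m" by linarith
  then have "(Gh a + Gh b) / 2 \<le> Gh m"
  proof cases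
    case 1
    have t: "Gh x \<le> g 0 * x" for x using Gh_tangent[of 0 x] G0 by simp
    have "Gh m = g 0 * m" using 1 by (simp add: Gh_def)
    moreover have "2 * (g 0 * m) = g 0 * a + g 0 * b" by (simp add: m_def algebra_simps)
    ultimately have "Gh a + Gh b \<le> 2 * Gh m" using t[of a] t[of b] by linarith
    then show ?thesis by simp
  next
    case 2
    have "Gh a \<le> G m + g m * (a - m)" "Gh b \<le> G m + g m * (b - m)" using Gh_tangent 2 by auto
    then have "Gh a + Gh b \<le> 2 * G m + g m * (a + b - 2 * m)" by (simp add: algebra_simps)
    moreover have "Gh m = G m" using 2 by (simp add: Gh_def)
    moreover have "a + b - 2 * m = 0" by (simp add: m_def)
    ultimately show ?thesis by simp
  next
    case 3
    then show ?thesis using Gh_le1[of a] Gh_le1[of b] unfolding Gh_def by simp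
  qed
  then show ?thesis by (simp add: m_def)
qed


definition f0 :: "real \<Rightarrow> real" where "f0 x = indicator {0..1} x * g x"

lemma f0_nonneg: "0 \<le> f0 x"
  using g_pos by (auto simp: f0_def indicator_def less_imp_le)

lemma f0_borel[measurable]: "f0 \<in> borel_measurable borel"
proof -
  have "(\<lambda>x. indicator {0..1} x *\<^sub>R g x) \<in> borel_measurable borel"
    by (rule borel_measurable_continuous_on_indicator) (auto simp: g_cont)
  then show ?thesis by (simp add: f0_def[abs_def])
qed

lemma f0_restrict: "f0 x * h x = (if x \<in> {0..1} then g x * h x else 0)"
  by (simp add: f0_def indicator_def)

lemma mu_def': "dens_distr g = density lborel (\<lambda>x. ennreal (f0 x))"
  by (simp add: dens_distr_def f0_def[abs_def])

lemma integ:
  assumes hb: "h \<in> borel_measurable borel" and hn: "\<And>x. 0 \<le> h x"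
    and hi: "((\<lambda>x. g x * h x) has_integral I) {0..1}"
  shows "(\<integral>\<^sup>+x. ennreal (h x) \<partial>dens_distr g) = ennreal I"
proof -
  have "(\<integral>\<^sup>+x. ennreal (h x) \<partial>dens_distr g) = (\<integral>\<^sup>+x. ennreal (f0 x) * ennreal (h x) \<partial>lborel)"
    unfolding mu_def' by (rule nn_integral_density) (use hb in auto)
  also have "\<dots> = (\<integral>\<^sup>+x. ennreal (f0 x * h x) \<partial>lborel)"
    using f0_nonneg hn by (simp add: ennreal_mult)
  also have "\<dots> = ennreal I"
  proof (rule nn_integral_has_integral_lborel)
    show "(\<lambda>x. f0 x * h x) \<in> borel_measurable borel" using hb by measurable
    show "\<And>x. 0 \<le> f0 x * h x" using f0_nonneg hn by simp
    show "((\<lambda>x. f0 x * h x) has_integral I) UNIV"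
      unfolding f0_restrict has_integral_restrict_UNIV by (rule hi)
  qed
  finally show ?thesis .
qed

lemma prob_mu: "prob_space (dens_distr g)"
proof
  have "emeasure (dens_distr g) (space (dens_distr g)) = (\<integral>\<^sup>+x. ennreal 1 \<partial>dens_distr g)"
    by simp
  also have "\<dots> = ennreal 1"
  proof (rule integ)
    show "((\<lambda>x. g x * 1) has_integral 1) {0..1}"
      using integrable_integral[OF g_int[of 0 1, simplified]] g_total by simp
  qed auto
  finally show "emeasure (dens_distr g) (space (dens_distr g)) = 1" by simp
qed

lemma space_mu[simp]: "space (dens_distr g) = UNIV"
  by (simp add: dens_distr_def)

lemma sets_mu[simp]: "sets (dens_distr g) = sets borel"
  by (simp add: dens_distr_def)

lemma tail: "emeasure (dens_distr g) {m..} \<le> ennreal (1 - Gh m)"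
proof -
  interpret prob_space "dens_distr g" by (rule prob_mu)
  consider "m < 0" | "0 \<le> m" "m \<le> 1" | "1 < m" by linarith
  then show ?thesis
  proof cases
    case 1
    have "emeasure (dens_distr g) {m..} \<le> 1" by (rule emeasure_le_1)
    moreover have "1 \<le> 1 - Gh m" using 1 mult_pos_neg[OF g0_pos 1] by (simp add: Gh_def)
    ultimately show ?thesis by (metis ennreal_1 ennreal_leI order_trans)
  next
    case 2
    have "emeasure (dens_distr g) {m..} = (\<integral>\<^sup>+x. ennreal (indicator {m..} x) \<partial>dens_distr g)"
      by (simp add: ennreal_indicator)
    also have "\<dots> = ennreal (integral {m..1} g)"
    proof (rule integ)
      have "(g has_integral integral {m..1} g) {m..1}" using g_int[of m 1] 2 by (simp add: integrable_integral)
      then have "((\<lambda>x. if x \<in> {m..1} then g x else 0) has_integral integral {m..1} g) {0..1}"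
        using 2 by (subst has_integral_restrict) auto
      then show "((\<lambda>x. g x * indicator {m..} x) has_integral integral {m..1} g) {0..1}"
        by (rule has_integral_eq[rotated]) (auto simp: indicator_def)
    qed auto
    also have "integral {m..1} g = 1 - Gh m" using G_diff[of m 1] G1 2 by (simp add: Gh_def)
    finally show ?thesis by simp
  next
    case 3
    have "emeasure (dens_distr g) {m..} = (\<integral>\<^sup>+x. ennreal (f0 x) * indicator {m..} x \<partial>lborel)"
      unfolding mu_def' by (rule emeasure_density) auto
    also have "\<dots> = (\<integral>\<^sup>+x. 0 \<partial>(lborel::real measure))"
    proof (rule nn_integral_cong)
      fix x show "ennreal (f0 x) * indicator {m..} x = 0" using 3 by (auto simp: f0_def indicator_def)
    qed
    finally show ?thesis by simp
  qed
qed


lemma V_integral: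
  assumes a: "0 < a"
  shows "(\<integral>\<^sup>+x. ennreal (vv (a * Gh x)) \<partial>dens_distr g) = ennreal (1 + (BB a - BB 0) / a)"
proof (rule integ)
  show "(\<lambda>x. vv (a * Gh x)) \<in> borel_measurable borel" unfolding vv_def by measurable
  show "\<And>x. 0 \<le> vv (a * Gh x)" using vv_ge1 by (meson order_trans zero_le_one)
  have d: "((\<lambda>x. BB (a * G x)) has_vector_derivative ((vv (a * G x) - 1) * (a * g x))) (at x within {0..1})"
    if x: "x \<in> {0..1}" for x
  proof -
    have "((\<lambda>u. integral {0..u} g) has_vector_derivative g x) (at x within {0..1})"
      by (rule integral_has_vector_derivative[OF g_cont x])
    hence "(G has_real_derivative g x) (at x within {0..1})"
      unfolding G_def[abs_def] has_real_derivative_iff_has_vector_derivative .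
    hence "((\<lambda>x. a * G x) has_real_derivative a * g x) (at x within {0..1})"
      by (rule DERIV_cmult)
    hence "((\<lambda>x. BB (a * G x)) has_real_derivative (vv (a * G x) - 1) * (a * g x)) (at x within {0..1})"
      by (rule DERIV_chain2[OF BB_deriv])
    then show ?thesis by (simp add: has_real_derivative_iff_has_vector_derivative)
  qed
  have "((\<lambda>x. (vv (a * G x) - 1) * (a * g x)) has_integral (BB (a * G 1) - BB (a * G 0))) {0..1}"
    by (rule fundamental_theorem_of_calculus) (use d in auto)
  hence h1: "((\<lambda>x. (1/a) * ((vv (a * G x) - 1) * (a * g x))) has_integral ((1/a) * (BB a - BB 0))) {0..1}"
    using G0 G1 by (intro has_integral_mult_right) simp
  have h2: "(g has_integral 1) {0..1}" using integrable_integral[OF g_int[of 0 1, simplified]] g_total by simp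
  have "((\<lambda>x. g x + (1/a) * ((vv (a * G x) - 1) * (a * g x))) has_integral (1 + (1/a) * (BB a - BB 0))) {0..1}"
    by (rule has_integral_add[OF h2 h1])
  hence "((\<lambda>x. g x + (1/a) * ((vv (a * G x) - 1) * (a * g x))) has_integral (1 + (BB a - BB 0) / a)) {0..1}"
    by simp
  then show "((\<lambda>x. g x * vv (a * Gh x)) has_integral (1 + (BB a - BB 0) / a)) {0..1}"
    by (rule has_integral_eq[rotated]) (use a in \<open>auto simp: Gh_def field_simps\<close>)
qed

lemma V_bound: "0 < a \<Longrightarrow> 1 + (BB a - BB 0) / a \<le> 1 + (2 - 2 * ln (3/2)) / a"
  using BB_bound[of a] by (simp add: divide_right_mono)

end

lemma ek_bound:
  fixes w :: "nat \<Rightarrow> real"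
  assumes "finite N" "\<And>i. i \<in> N \<Longrightarrow> 0 \<le> w i"
  shows "(\<Sum>I\<in>{I. I \<subseteq> N \<and> card I = k}. \<Prod>i\<in>I. w i) * 3 ^ k \<le> (\<Prod>i\<in>N. 1 + 3 * w i)"
proof -
  have "(\<Prod>i\<in>N. 1 + 3 * w i) = (\<Prod>i\<in>N. 3 * w i + 1)" by (simp add: add.commute)
  also have "\<dots> = (\<Sum>X\<in>Pow N. (\<Prod>i\<in>X. 3 * w i) * (\<Prod>i\<in>N - X. 1))"
    by (rule prod_add[OF assms(1)])
  also have "\<dots> = (\<Sum>X\<in>Pow N. 3 ^ card X * (\<Prod>i\<in>X. w i))"
    by (simp add: prod.distrib)
  also have "\<dots> \<ge> (\<Sum>X\<in>{I. I \<subseteq> N \<and> card I = k}. 3 ^ card X * (\<Prod>i\<in>X. w i))"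
  proof (rule sum_mono2)
    fix b assume "b \<in> Pow N - {I. I \<subseteq> N \<and> card I = k}"
    hence "b \<subseteq> N" by auto
    hence "0 \<le> prod w b" using assms(2) by (intro prod_nonneg) auto
    then show "0 \<le> 3 ^ card b * prod w b" by simp
  qed (use assms in auto)
  also have "(\<Sum>X\<in>{I. I \<subseteq> N \<and> card I = k}. 3 ^ card X * (\<Prod>i\<in>X. w i))
      = (\<Sum>X\<in>{I. I \<subseteq> N \<and> card I = k}. (\<Prod>i\<in>X. w i) * 3 ^ k)"
    by (rule sum.cong) auto
  also have "\<dots> = (\<Sum>I\<in>{I. I \<subseteq> N \<and> card I = k}. \<Prod>i\<in>I. w i) * 3 ^ k"
    by (rule sum_distrib_right[symmetric])
  finally show ?thesis .
qed

definition pairs :: "nat set \<Rightarrow> (nat \<times> nat) set" where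
  "pairs I = {p. fst p \<in> I \<and> snd p \<in> I \<and> fst p < snd p}"

lemma pairs_finite: "finite I \<Longrightarrow> finite (pairs I)"
  by (rule finite_subset[of _ "I \<times> I"]) (auto simp: pairs_def)

lemma pair_sum:
  fixes u :: "nat \<Rightarrow> real"
  assumes fin: "finite I"
  shows "(\<Sum>p\<in>pairs I. u (fst p) + u (snd p)) = (real (card I) - 1) * (\<Sum>i\<in>I. u i)"
proof -
  define OD where "OD = Sigma I (\<lambda>i. I - {i})"
  have fOD: "finite OD" using fin by (simp add: OD_def)
  have split: "OD = pairs I \<union> (\<lambda>(i,j). (j,i)) ` pairs I"
    by (auto simp: OD_def pairs_def image_iff)
  have disj: "pairs I \<inter> (\<lambda>(i,j). (j,i)) ` pairs I = {}" by (auto simp: pairs_def)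
  have inj: "inj_on (\<lambda>(i,j). (j,i)) (pairs I)" by (auto simp: inj_on_def)
  have "(\<Sum>p\<in>OD. u (fst p)) = (\<Sum>p\<in>pairs I. u (fst p)) + (\<Sum>p\<in>(\<lambda>(i,j). (j,i)) ` pairs I. u (fst p))"
    unfolding split by (rule sum.union_disjoint) (use fin pairs_finite disj in auto)
  also have "(\<Sum>p\<in>(\<lambda>(i,j). (j,i)) ` pairs I. u (fst p)) = (\<Sum>p\<in>pairs I. u (snd p))"
    by (subst sum.reindex[OF inj]) (auto intro!: sum.cong)
  finally have 1: "(\<Sum>p\<in>OD. u (fst p)) = (\<Sum>p\<in>pairs I. u (fst p) + u (snd p))"
    by (simp add: sum.distrib)
  have "(\<Sum>i\<in>I. \<Sum>j\<in>I - {i}. u i) = (\<Sum>(i,j)\<in>OD. u i)"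
    unfolding OD_def by (rule sum.Sigma) (use fin in auto)
  hence "(\<Sum>p\<in>OD. u (fst p)) = (\<Sum>i\<in>I. \<Sum>j\<in>I - {i}. u i)"
    by (simp add: case_prod_beta')
  also have "\<dots> = (\<Sum>i\<in>I. (real (card I) - 1) * u i)"
  proof (rule sum.cong)
    fix x assume x: "x \<in> I"
    hence "card I \<ge> 1" using fin by (metis card_0_eq empty_iff less_one not_le)
    then show "(\<Sum>j\<in>I - {x}. u x) = (real (card I) - 1) * u x"
      using x fin by (simp add: card_Diff_singleton of_nat_diff)
  qed simp
  finally show ?thesis using 1 by (simp add: sum_distrib_left)
qed


definition Dg :: "nat \<Rightarrow> (nat \<times> nat) set" where "Dg n = (\<lambda>i. (i, i)) ` {1..n}"
definition Off :: "nat \<Rightarrow> (nat \<times> nat) set" where "Off n = {p. 1 \<le> fst p \<and> fst p < snd p \<and> snd p \<le> n}"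

lemma entry_split: "entry_idx n = Dg n \<union> Off n"
  by (auto simp: entry_idx_def Dg_def Off_def image_iff)

lemma Dg_Off_disj: "Dg n \<inter> Off n = {}" by (auto simp: Dg_def Off_def)

lemma finite_Dg: "finite (Dg n)" by (simp add: Dg_def)
lemma finite_Off: "finite (Off n)"
  by (rule finite_subset[of _ "{1..n} \<times> {1..n}"]) (auto simp: Off_def)
lemma finite_entry: "finite (entry_idx n)" by (simp add: entry_split finite_Dg finite_Off)

lemma pairs_Off: "I \<subseteq> {1..n} \<Longrightarrow> pairs I \<subseteq> Off n"
  by (auto simp: pairs_def Off_def)

definition KIf :: "nat set \<Rightarrow> (nat \<times> nat \<Rightarrow> real) \<Rightarrow> bool" where
  "KIf I \<omega> = (\<forall>p\<in>pairs I. (\<omega> (fst p, fst p) + \<omega> (snd p, snd p)) / 2 \<le> \<omega> p)"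

lemma Kset_empty: "is_Kset n \<omega> {}" by (simp add: is_Kset_def)

lemma Lmax_ex:
  assumes "k \<le> L_max n \<omega>"
  shows "\<exists>I. I \<subseteq> {1..n} \<and> card I = k \<and> KIf I \<omega>"
proof -
  let ?S = "{card I | I. is_Kset n \<omega> I}"
  have "?S \<subseteq> card ` Pow {1..n}" by (auto simp: is_Kset_def)
  hence fin: "finite ?S" by (rule finite_subset) simp
  have ne: "?S \<noteq> {}" using Kset_empty by blast
  have "L_max n \<omega> \<in> ?S" unfolding L_max_def using Max_in[OF fin ne] .
  then obtain J where J: "is_Kset n \<omega> J" "card J = L_max n \<omega>" by force
  obtain I where I: "I \<subseteq> J" "card I = k" using obtain_subset_with_card_n[of k J] assms J(2) by metis
  have IJ: "I \<subseteq> {1..n}" using I J(1) by (auto simp: is_Kset_def)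
  have "KIf I \<omega>" unfolding KIf_def
  proof
    fix p assume p: "p \<in> pairs I"
    then have "fst p \<in> J" "snd p \<in> J" "fst p \<noteq> snd p" "fst p < snd p" using I by (auto simp: pairs_def)
    then have "sym_entry \<omega> (fst p) (snd p) \<ge> (sym_entry \<omega> (fst p) (fst p) + sym_entry \<omega> (snd p) (snd p)) / 2"
      using J(1) unfolding is_Kset_def by blast
    then show "(\<omega> (fst p, fst p) + \<omega> (snd p, snd p)) / 2 \<le> \<omega> p"
      using \<open>fst p < snd p\<close> by (simp add: sym_entry_def min_def max_def)
  qed
  then show ?thesis using IJ I by blast
qed

lemma Lmax_le_iff:
  "(L_max n \<omega> < k) \<longleftrightarrow> (\<forall>I\<in>Pow {1..n}. k \<le> card I \<longrightarrow> \<not> is_Kset n \<omega> I)"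
proof -
  let ?S = "{card I | I. is_Kset n \<omega> I}"
  have "?S \<subseteq> card ` Pow {1..n}" by (auto simp: is_Kset_def)
  hence fin: "finite ?S" by (rule finite_subset) simp
  have ne: "?S \<noteq> {}" using Kset_empty by blast
  have sub: "is_Kset n \<omega> I \<Longrightarrow> I \<in> Pow {1..n}" for I by (simp add: is_Kset_def)
  have "(L_max n \<omega> < k) \<longleftrightarrow> (\<forall>a\<in>?S. a < k)" unfolding L_max_def using fin ne by (rule Max_less_iff)
  also have "\<dots> \<longleftrightarrow> (\<forall>I. is_Kset n \<omega> I \<longrightarrow> card I < k)" by blast
  also have "\<dots> \<longleftrightarrow> (\<forall>I\<in>Pow {1..n}. k \<le> card I \<longrightarrow> \<not> is_Kset n \<omega> I)"
    using sub by (meson not_le)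
  finally show ?thesis .
qed

lemma sets_good:
  fixes M :: "real measure"
  assumes "sets M = sets borel"
  shows "{\<omega> \<in> space (PiM (entry_idx n) (\<lambda>_. M)). L_max n \<omega> < k} \<in> sets (PiM (entry_idx n) (\<lambda>_. M))"
proof -
  have comp: "(\<lambda>\<omega>. sym_entry \<omega> i j) \<in> borel_measurable (PiM (entry_idx n) (\<lambda>_. M))"
    if "i \<in> {1..n}" "j \<in> {1..n}" for i j
  proof -
    have "(min i j, max i j) \<in> entry_idx n" using that by (auto simp: entry_idx_def)
    then show ?thesis unfolding sym_entry_def using assms
      by (auto intro!: measurable_PiM_component_rev simp: measurable_def)
  qed
  let ?P = "PiM (entry_idx n) (\<lambda>_. M)"
  have Kmeas: "{\<omega> \<in> space ?P. is_Kset n \<omega> I} \<in> sets ?P" if I: "I \<in> Pow {1..n}" for I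
  proof -
    have "{\<omega> \<in> space ?P. is_Kset n \<omega> I}
       = {\<omega> \<in> space ?P. \<forall>i\<in>I. \<forall>j\<in>I. i \<noteq> j \<longrightarrow> sym_entry \<omega> i j \<ge> (sym_entry \<omega> i i + sym_entry \<omega> j j) / 2}"
      using I by (auto simp: is_Kset_def)
    also have "\<dots> \<in> sets ?P"
    proof -
      have fI: "finite I" using I finite_subset by auto
      have II: "\<And>i j. i \<in> I \<Longrightarrow> j \<in> I \<Longrightarrow> i \<in> {1..n} \<and> j \<in> {1..n}" using I by auto
      show ?thesis
      proof (rule sets.sets_Collect_finite_All[OF _ fI])
        fix i assume i: "i \<in> I"
        show "{\<omega> \<in> space ?P. \<forall>j\<in>I. i \<noteq> j \<longrightarrow> (sym_entry \<omega> i i + sym_entry \<omega> j j) / 2 \<le> sym_entry \<omega> i j} \<in> sets ?P"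
        proof (rule sets.sets_Collect_finite_All[OF _ fI])
          fix j assume j: "j \<in> I"
          have [measurable]: "(\<lambda>\<omega>. sym_entry \<omega> i j) \<in> borel_measurable ?P"
            "(\<lambda>\<omega>. sym_entry \<omega> i i) \<in> borel_measurable ?P" "(\<lambda>\<omega>. sym_entry \<omega> j j) \<in> borel_measurable ?P"
            using comp II i j by auto
          have f1: "(\<lambda>\<omega>. (sym_entry \<omega> i i + sym_entry \<omega> j j) / 2) \<in> borel_measurable ?P" by measurable
          have S: "{\<omega> \<in> space ?P. (sym_entry \<omega> i i + sym_entry \<omega> j j) / 2 \<le> sym_entry \<omega> i j} \<in> sets ?P"
            by (rule borel_measurable_le[OF f1]) measurable
          show "{\<omega> \<in> space ?P. i \<noteq> j \<longrightarrow> (sym_entry \<omega> i i + sym_entry \<omega> j j) / 2 \<le> sym_entry \<omega> i j} \<in> sets ?P"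
            using S by (cases "i = j") auto
        qed
      qed
    qed
    finally show ?thesis .
  qed
  have bad: "{\<omega> \<in> space ?P. \<not> L_max n \<omega> < k} = (\<Union>I\<in>{I\<in>Pow {1..n}. k \<le> card I}. {\<omega> \<in> space ?P. is_Kset n \<omega> I})"
    by (auto simp: Lmax_le_iff)
  have "(\<Union>I\<in>{I\<in>Pow {1..n}. k \<le> card I}. {\<omega> \<in> space ?P. is_Kset n \<omega> I}) \<in> sets ?P"
    by (rule sets.finite_UN) (use Kmeas in auto)
  hence "space ?P - {\<omega> \<in> space ?P. \<not> L_max n \<omega> < k} \<in> sets ?P" unfolding bad by auto
  moreover have "space ?P - {\<omega> \<in> space ?P. \<not> L_max n \<omega> < k} = {\<omega> \<in> space ?P. L_max n \<omega> < k}" by auto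
  ultimately show ?thesis by simp
qed


context dens begin

definition aa :: "nat \<Rightarrow> real" where "aa k = (real k - 1) / 2"
definition Vf :: "nat \<Rightarrow> real \<Rightarrow> real" where "Vf k y = vv (aa k * Gh y)"
definition Wf :: "nat \<Rightarrow> real \<Rightarrow> real" where "Wf k y = exp (- (aa k * Gh y))"
definition Zd :: "nat \<Rightarrow> nat \<Rightarrow> (nat \<times> nat \<Rightarrow> real) \<Rightarrow> real" where
  "Zd n k x = (\<Prod>i\<in>{1..n}. Vf k (x (i, i)))"
definition Vint :: "nat \<Rightarrow> real" where "Vint k = 1 + (BB (aa k) - BB 0) / aa k"

lemma Vf_sq: "(Vf k y)^2 = 1 + 3 * Wf k y"
  by (simp add: Vf_def Wf_def vv_def add_nonneg_nonneg)

lemma Vf_ge1: "1 \<le> Vf k y" by (simp add: Vf_def vv_ge1)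

lemma Vf_meas[measurable]: "Vf k \<in> borel_measurable borel"
  unfolding Vf_def[abs_def] vv_def by measurable

lemma meas_mu: "f \<in> borel_measurable borel \<Longrightarrow> f \<in> borel_measurable (dens_distr g)"
  by (simp add: measurable_def)

lemma Zd_pos: "0 < Zd n k x"
  unfolding Zd_def using Vf_ge1 by (intro prod_pos) (meson less_le_trans zero_less_one)

lemma psf: "product_sigma_finite (\<lambda>_::nat \<times> nat. dens_distr g)"
  unfolding product_sigma_finite_def using prob_mu prob_space_imp_sigma_finite by blast

lemma card_Dg: "card (Dg n) = n"
  unfolding Dg_def by (subst card_image) (auto simp: inj_on_def)

lemma Vf_int: "2 \<le> k \<Longrightarrow> (\<integral>\<^sup>+y. ennreal (Vf k y) \<partial>dens_distr g) = ennreal (Vint k)"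
  unfolding Vf_def Vint_def by (rule V_integral) (simp add: aa_def)

lemma Zd_prod: assumes "Dg n \<subseteq> J" "finite J"
  shows "Zd n k x = (\<Prod>p\<in>J. if p \<in> Dg n then Vf k (x p) else 1)"
proof -
  have "(\<Prod>p\<in>J. if p \<in> Dg n then Vf k (x p) else 1) = (\<Prod>p\<in>Dg n. Vf k (x p))"
    using assms by (intro prod.mono_neutral_cong_right) auto
  also have "\<dots> = Zd n k x" unfolding Dg_def Zd_def
    by (subst prod.reindex) (auto simp: inj_on_def)
  finally show ?thesis ..
qed

lemma Zd_meas: assumes "Dg n \<subseteq> J" "finite J"
  shows "(\<lambda>x. ennreal (Zd n k x)) \<in> borel_measurable (PiM J (\<lambda>_. dens_distr g))"
proof -
  have c: "(\<lambda>x. Vf k (x (i,i))) \<in> borel_measurable (PiM J (\<lambda>_. dens_distr g))" if "i \<in> {1..n}" for i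
  proof (rule measurable_PiM_component_rev)
    show "(i, i) \<in> J" using that assms(1) by (auto simp: Dg_def)
    show "Vf k \<in> borel_measurable (dens_distr g)" using Vf_meas by (simp add: measurable_def)
  qed
  have "(\<lambda>x. Zd n k x) \<in> borel_measurable (PiM J (\<lambda>_. dens_distr g))"
    unfolding Zd_def by (rule borel_measurable_prod) (use c in auto)
  then show ?thesis by measurable
qed

lemma Vint_ge1: assumes "2 \<le> k" shows "1 \<le> Vint k"
proof -
  interpret prob_space "dens_distr g" by (rule prob_mu)
  have "(\<integral>\<^sup>+y. ennreal 1 \<partial>dens_distr g) \<le> (\<integral>\<^sup>+y. ennreal (Vf k y) \<partial>dens_distr g)"
    by (intro nn_integral_mono) (simp add: Vf_ge1)
  moreover have "emeasure (dens_distr g) UNIV = 1" using emeasure_space_1 by simp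
  ultimately have "ennreal 1 \<le> ennreal (Vint k)" using Vf_int[OF assms] by simp
  then show ?thesis by (simp add: ennreal_le_iff2)
qed

lemma Zd_integral: assumes "Dg n \<subseteq> J" "finite J" "2 \<le> k"
  shows "(\<integral>\<^sup>+x. ennreal (Zd n k x) \<partial>PiM J (\<lambda>_. dens_distr g)) = ennreal (Vint k ^ n)"
proof -
  interpret product_sigma_finite "\<lambda>_::nat \<times> nat. dens_distr g" by (rule psf)
  interpret prob_space "dens_distr g" by (rule prob_mu)
  have "(\<integral>\<^sup>+x. ennreal (Zd n k x) \<partial>PiM J (\<lambda>_. dens_distr g))
      = (\<integral>\<^sup>+x. (\<Prod>p\<in>J. ennreal (if p \<in> Dg n then Vf k (x p) else 1)) \<partial>PiM J (\<lambda>_. dens_distr g))"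
    unfolding Zd_prod[OF assms(1,2)] using Vf_ge1
    by (intro nn_integral_cong prod_ennreal[symmetric]) (auto intro: order_trans[OF zero_le_one])
  also have "\<dots> = (\<Prod>p\<in>J. \<integral>\<^sup>+t. ennreal (if p \<in> Dg n then Vf k t else 1) \<partial>dens_distr g)"
  proof (rule product_nn_integral_prod[OF assms(2)])
    fix p show "(\<lambda>t. ennreal (if p \<in> Dg n then Vf k t else 1)) \<in> borel_measurable (dens_distr g)"
    proof (cases "p \<in> Dg n")
      case True
      have "(\<lambda>t. ennreal (Vf k t)) \<in> borel_measurable borel" by measurable
      then show ?thesis using True by (simp add: meas_mu)
    qed simp
  qed
  also have "\<dots> = (\<Prod>p\<in>J. if p \<in> Dg n then ennreal (Vint k) else 1)"
  proof (intro prod.cong refl)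
    fix p show "(\<integral>\<^sup>+t. ennreal (if p \<in> Dg n then Vf k t else 1) \<partial>dens_distr g) = (if p \<in> Dg n then ennreal (Vint k) else 1)"
      using Vf_int[OF assms(3)] emeasure_space_1 by (cases "p \<in> Dg n") auto
  qed
  also have "\<dots> = (\<Prod>p\<in>Dg n. ennreal (Vint k))"
    using assms by (intro prod.mono_neutral_cong_right) auto
  also have "\<dots> = ennreal (Vint k ^ n)"
    using card_Dg[of n] Vint_ge1[OF assms(3)] by (simp add: ennreal_power)
  finally show ?thesis .
qed


lemma Zd_meas_real: assumes "Dg n \<subseteq> J"
  shows "Zd n k \<in> borel_measurable (PiM J (\<lambda>_. dens_distr g))"
proof -
  have c: "(\<lambda>x. Vf k (x (i,i))) \<in> borel_measurable (PiM J (\<lambda>_. dens_distr g))" if "i \<in> {1..n}" for i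
  proof (rule measurable_PiM_component_rev)
    show "(i, i) \<in> J" using that assms(1) by (auto simp: Dg_def)
    show "Vf k \<in> borel_measurable (dens_distr g)" using Vf_meas by (simp add: measurable_def)
  qed
  show ?thesis unfolding Zd_def[abs_def] by (rule borel_measurable_prod) (use c in auto)
qed

lemma KIf_sets: assumes I: "I \<subseteq> {1..n}"
  shows "{\<omega> \<in> space (PiM (entry_idx n) (\<lambda>_. dens_distr g)). KIf I \<omega>} \<in> sets (PiM (entry_idx n) (\<lambda>_. dens_distr g))"
proof -
  let ?P = "PiM (entry_idx n) (\<lambda>_. dens_distr g)"
  have fI: "finite I" using I finite_subset by auto
  have comp: "(\<lambda>\<omega>. \<omega> q) \<in> borel_measurable ?P" if "q \<in> entry_idx n" for q
  proof -
    have "(\<lambda>\<omega>. \<omega> q) \<in> measurable ?P (dens_distr g)" by (rule measurable_component_singleton[OF that])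
    then show ?thesis using measurable_cong_sets[OF refl sets_mu, of ?P] by blast
  qed
  show ?thesis unfolding KIf_def
  proof (rule sets.sets_Collect_finite_All[OF _ pairs_finite[OF fI]])
    fix p assume p: "p \<in> pairs I"
    have "p \<in> entry_idx n" "(fst p, fst p) \<in> entry_idx n" "(snd p, snd p) \<in> entry_idx n"
      using p I by (auto simp: pairs_def entry_idx_def)
    note [measurable] = comp[OF this(1)] comp[OF this(2)] comp[OF this(3)]
    have f1: "(\<lambda>\<omega>. (\<omega> (fst p, fst p) + \<omega> (snd p, snd p)) / 2) \<in> borel_measurable ?P" by measurable
    show "{\<omega> \<in> space ?P. (\<omega> (fst p, fst p) + \<omega> (snd p, snd p)) / 2 \<le> \<omega> p} \<in> sets ?P"
      by (rule borel_measurable_le[OF f1]) measurable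
  qed
qed

lemma tail_real: "measure (dens_distr g) {m..} \<le> exp (- ((Gh a + Gh b) / 2))" if "m = (a + b) / 2"
proof -
  interpret prob_space "dens_distr g" by (rule prob_mu)
  have "ennreal (measure (dens_distr g) {m..}) \<le> ennreal (1 - Gh m)"
    using tail[of m] by (simp add: emeasure_eq_measure)
  moreover have "0 \<le> 1 - Gh m" using Gh_le1[of m] by simp
  ultimately have "measure (dens_distr g) {m..} \<le> 1 - Gh m" by (simp add: ennreal_le_iff)
  also have "\<dots> \<le> 1 - (Gh a + Gh b) / 2" using Gh_concave_mid[of a b] unfolding that by simp
  also have "\<dots> \<le> exp (- ((Gh a + Gh b) / 2))" using exp_ge_add_one_self[of "- ((Gh a + Gh b) / 2)"] by simp
  finally show ?thesis .
qed

lemma pairs_exp: assumes "finite I" "card I = k"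
  shows "(\<Prod>p\<in>pairs I. exp (- ((Gh (x (fst p, fst p)) + Gh (x (snd p, snd p))) / 2))) = (\<Prod>i\<in>I. Wf k (x (i, i)))"
proof -
  have "(\<Prod>p\<in>pairs I. exp (- ((Gh (x (fst p, fst p)) + Gh (x (snd p, snd p))) / 2)))
      = exp (\<Sum>p\<in>pairs I. - ((Gh (x (fst p, fst p)) + Gh (x (snd p, snd p))) / 2))"
    using pairs_finite[OF assms(1)] by (simp add: exp_sum)
  also have "\<dots> = exp (- (\<Sum>p\<in>pairs I. Gh (x (fst p, fst p)) + Gh (x (snd p, snd p))) / 2)"
    by (simp add: sum_negf sum_divide_distrib)
  also have "\<dots> = exp (- ((real (card I) - 1) * (\<Sum>i\<in>I. Gh (x (i, i)))) / 2)"
    using pair_sum[OF assms(1), of "\<lambda>i. Gh (x (i, i))"] by simp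
  also have "\<dots> = exp (\<Sum>i\<in>I. - (aa k * Gh (x (i, i))))"
  proof -
    have "(\<Sum>i\<in>I. - (aa k * Gh (x (i, i)))) = - (aa k * (\<Sum>i\<in>I. Gh (x (i, i))))"
      by (simp add: sum_negf sum_distrib_left)
    then show ?thesis using assms by (simp add: aa_def)
  qed
  also have "\<dots> = (\<Prod>i\<in>I. Wf k (x (i, i)))"
    using assms by (simp add: exp_sum Wf_def)
  finally show ?thesis .
qed


lemma KI_integral:
  assumes I: "I \<subseteq> {1..n}" "card I = k" and k2: "2 \<le> k"
  shows "(\<integral>\<^sup>+\<omega>. (if KIf I \<omega> then ennreal (sqrt 3 ^ k / Zd n k \<omega>) else 0) \<partial>PiM (entry_idx n) (\<lambda>_. dens_distr g))
        \<le> (\<integral>\<^sup>+x. ennreal (sqrt 3 ^ k / Zd n k x * (\<Prod>i\<in>I. Wf k (x (i, i)))) \<partial>PiM (Dg n) (\<lambda>_. dens_distr g))"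
proof -
  interpret product_sigma_finite "\<lambda>_::nat\<times>nat. dens_distr g" by (rule psf)
  interpret prob_space "dens_distr g" by (rule prob_mu)
  let ?mu = "dens_distr g"
  define c where "c = sqrt 3 ^ k"
  define F where "F \<omega> = (if KIf I \<omega> then ennreal (c / Zd n k \<omega>) else 0)" for \<omega>
  have fI: "finite I" using I(1) finite_subset by auto
  have [measurable]: "Zd n k \<in> borel_measurable (PiM (entry_idx n) (\<lambda>_. ?mu))"
    by (rule Zd_meas_real) (simp add: entry_split)
  have FM: "F \<in> borel_measurable (PiM (entry_idx n) (\<lambda>_. ?mu))"
    unfolding F_def by (rule measurable_If[OF _ _ KIf_sets[OF I(1)]]) measurable
  have "(\<integral>\<^sup>+\<omega>. F \<omega> \<partial>PiM (entry_idx n) (\<lambda>_. ?mu))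
      = (\<integral>\<^sup>+x. (\<integral>\<^sup>+y. F (merge (Dg n) (Off n) (x, y)) \<partial>PiM (Off n) (\<lambda>_. ?mu)) \<partial>PiM (Dg n) (\<lambda>_. ?mu))"
    unfolding entry_split
    by (rule product_nn_integral_fold[OF Dg_Off_disj finite_Dg finite_Off]) (use FM in \<open>simp add: entry_split\<close>)
  also have "\<dots> \<le> (\<integral>\<^sup>+x. ennreal (c / Zd n k x * (\<Prod>i\<in>I. Wf k (x (i, i)))) \<partial>PiM (Dg n) (\<lambda>_. ?mu))"
  proof (rule nn_integral_mono)
    fix x assume x: "x \<in> space (PiM (Dg n) (\<lambda>_. ?mu))"
    define mid where "mid p = (x (fst p, fst p) + x (snd p, snd p)) / 2" for p
    define psi where "psi p t = (if p \<in> pairs I then indicator {mid p..} t else (1::ennreal))" for p t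
    have PO: "pairs I \<subseteq> Off n" by (rule pairs_Off[OF I(1)])
    have Zm: "Zd n k (merge (Dg n) (Off n) (x, y)) = Zd n k x" for y
      unfolding Zd_def by (intro prod.cong refl) (auto simp: merge_def Dg_def)
    have Km: "(\<Prod>p\<in>Off n. psi p (y p)) = 1" if K: "KIf I (merge (Dg n) (Off n) (x, y))" for y
    proof (rule prod.neutral, rule ballI)
      fix p assume p: "p \<in> Off n"
      show "psi p (y p) = 1"
      proof (cases "p \<in> pairs I")
        case True
        have "fst p \<in> I" "snd p \<in> I" "fst p < snd p" using True by (auto simp: pairs_def)
        hence D: "(fst p, fst p) \<in> Dg n" "(snd p, snd p) \<in> Dg n" "p \<notin> Dg n" using I(1) by (auto simp: Dg_def)
        have "(merge (Dg n) (Off n) (x, y) (fst p, fst p) + merge (Dg n) (Off n) (x, y) (snd p, snd p)) / 2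
              \<le> merge (Dg n) (Off n) (x, y) p" using K True by (simp add: KIf_def)
        hence "mid p \<le> y p" using p D by (simp add: merge_def mid_def)
        then show ?thesis using True by (simp add: psi_def indicator_def)
      qed (simp add: psi_def)
    qed
    have psiM: "psi p \<in> borel_measurable ?mu" for p
    proof (cases "p \<in> pairs I")
      case True
      have "(indicator {mid p..} :: real \<Rightarrow> ennreal) \<in> borel_measurable borel" by measurable
      then show ?thesis using True unfolding psi_def by (simp add: meas_mu)
    next
      case False
      then have "psi p = (\<lambda>t. 1)" by (simp add: psi_def[abs_def])
      then show ?thesis by simp
    qed
    have "(\<integral>\<^sup>+y. F (merge (Dg n) (Off n) (x, y)) \<partial>PiM (Off n) (\<lambda>_. ?mu))
        \<le> (\<integral>\<^sup>+y. ennreal (c / Zd n k x) * (\<Prod>p\<in>Off n. psi p (y p)) \<partial>PiM (Off n) (\<lambda>_. ?mu))"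
    proof (rule nn_integral_mono)
      fix y show "F (merge (Dg n) (Off n) (x, y)) \<le> ennreal (c / Zd n k x) * (\<Prod>p\<in>Off n. psi p (y p))"
        using Km[of y] by (cases "KIf I (merge (Dg n) (Off n) (x, y))") (auto simp: F_def Zm)
    qed
    also have "\<dots> = ennreal (c / Zd n k x) * (\<integral>\<^sup>+y. (\<Prod>p\<in>Off n. psi p (y p)) \<partial>PiM (Off n) (\<lambda>_. ?mu))"
    proof (rule nn_integral_cmult)
      show "(\<lambda>y. \<Prod>p\<in>Off n. psi p (y p)) \<in> borel_measurable (PiM (Off n) (\<lambda>_. ?mu))"
        using psiM by (intro borel_measurable_prod_ennreal) (auto intro!: measurable_PiM_component_rev)
    qed
    also have "(\<integral>\<^sup>+y. (\<Prod>p\<in>Off n. psi p (y p)) \<partial>PiM (Off n) (\<lambda>_. ?mu)) = (\<Prod>p\<in>Off n. \<integral>\<^sup>+t. psi p t \<partial>?mu)"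
      by (rule product_nn_integral_prod[OF finite_Off psiM])
    also have "\<dots> = (\<Prod>p\<in>Off n. ennreal (if p \<in> pairs I then measure ?mu {mid p..} else 1))"
    proof (intro prod.cong refl)
      fix p show "(\<integral>\<^sup>+t. psi p t \<partial>?mu) = ennreal (if p \<in> pairs I then measure ?mu {mid p..} else 1)"
        using prob_space by (cases "p \<in> pairs I") (auto simp: psi_def emeasure_eq_measure)
    qed
    also have "\<dots> = ennreal (\<Prod>p\<in>Off n. if p \<in> pairs I then measure ?mu {mid p..} else 1)"
      by (rule prod_ennreal) auto
    also have "ennreal (c / Zd n k x) * \<dots> \<le> ennreal (c / Zd n k x) * ennreal (\<Prod>i\<in>I. Wf k (x (i, i)))"
    proof (rule mult_left_mono[OF ennreal_leI])
      have "(\<Prod>p\<in>Off n. if p \<in> pairs I then measure ?mu {mid p..} else 1)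
          \<le> (\<Prod>p\<in>Off n. if p \<in> pairs I then exp (- ((Gh (x (fst p, fst p)) + Gh (x (snd p, snd p))) / 2)) else 1)"
        by (intro prod_mono) (auto simp: tail_real mid_def)
      also have "\<dots> = (\<Prod>p\<in>pairs I. exp (- ((Gh (x (fst p, fst p)) + Gh (x (snd p, snd p))) / 2)))"
        using PO by (intro prod.mono_neutral_cong_right finite_Off) auto
      also have "\<dots> = (\<Prod>i\<in>I. Wf k (x (i, i)))" by (rule pairs_exp[OF fI I(2)])
      finally show "(\<Prod>p\<in>Off n. if p \<in> pairs I then measure ?mu {mid p..} else 1) \<le> (\<Prod>i\<in>I. Wf k (x (i, i)))" .
    qed simp
    also have "\<dots> = ennreal (c / Zd n k x * (\<Prod>i\<in>I. Wf k (x (i, i))))"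
    proof (subst ennreal_mult[symmetric])
      show "0 \<le> c / Zd n k x" using Zd_pos[of n k x] by (simp add: c_def)
      show "0 \<le> (\<Prod>i\<in>I. Wf k (x (i, i)))" by (auto simp: Wf_def intro!: prod_nonneg)
    qed simp
    finally show "(\<integral>\<^sup>+y. F (merge (Dg n) (Off n) (x, y)) \<partial>PiM (Off n) (\<lambda>_. ?mu))
        \<le> ennreal (c / Zd n k x * (\<Prod>i\<in>I. Wf k (x (i, i))))" .
  qed
  finally show ?thesis unfolding F_def c_def .
qed


lemma Zc_integral: assumes "Dg n \<subseteq> J" "finite J" "2 \<le> k"
  shows "(\<integral>\<^sup>+x. ennreal (Zd n k x / sqrt 3 ^ k) \<partial>PiM J (\<lambda>_. dens_distr g)) = ennreal (Vint k ^ n / sqrt 3 ^ k)"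
proof -
  have "(\<integral>\<^sup>+x. ennreal (Zd n k x / sqrt 3 ^ k) \<partial>PiM J (\<lambda>_. dens_distr g))
      = (\<integral>\<^sup>+x. ennreal (1 / sqrt 3 ^ k) * ennreal (Zd n k x) \<partial>PiM J (\<lambda>_. dens_distr g))"
    using Zd_pos by (intro nn_integral_cong) (simp add: ennreal_mult[symmetric] less_imp_le)
  also have "\<dots> = ennreal (1 / sqrt 3 ^ k) * ennreal (Vint k ^ n)"
    by (subst nn_integral_cmult) (use Zd_meas[OF assms(1,2)] Zd_integral[OF assms] in auto)
  also have "\<dots> = ennreal (Vint k ^ n / sqrt 3 ^ k)"
    using Vint_ge1[OF assms(3)] by (simp add: ennreal_mult[symmetric])
  finally show ?thesis .
qed

lemma Sk_finite: "finite {I. I \<subseteq> {1..(n::nat)} \<and> card I = k}"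
  by (rule finite_subset[of _ "Pow {1..n}"]) auto

lemma ek_pointwise:
  assumes k2: "2 \<le> k"
  shows "(\<Sum>I\<in>{I. I \<subseteq> {1..n} \<and> card I = k}. sqrt 3 ^ k / Zd n k x * (\<Prod>i\<in>I. Wf k (x (i, i))))
         \<le> Zd n k x / sqrt 3 ^ k"
proof -
  let ?S = "{I. I \<subseteq> {1..n} \<and> card I = k}"
  let ?c = "sqrt 3 ^ k"
  have c2: "?c * ?c = 3 ^ k" by (simp add: power_mult_distrib[symmetric])
  have cp: "0 < ?c" by simp
  have Zp: "0 < Zd n k x" by (rule Zd_pos)
  have e: "(\<Sum>I\<in>?S. \<Prod>i\<in>I. Wf k (x (i, i))) * 3 ^ k \<le> (\<Prod>i\<in>{1..n}. 1 + 3 * Wf k (x (i, i)))"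
    by (rule ek_bound) (auto simp: Wf_def)
  also have "\<dots> = (Zd n k x)^2" unfolding Zd_def power2_eq_square prod.distrib[symmetric]
    by (intro prod.cong refl) (simp add: Vf_sq[symmetric] power2_eq_square)
  finally have e2: "(\<Sum>I\<in>?S. \<Prod>i\<in>I. Wf k (x (i, i))) * (?c * ?c) \<le> Zd n k x * Zd n k x"
    unfolding c2 by (simp add: power2_eq_square)
  have "(\<Sum>I\<in>?S. ?c / Zd n k x * (\<Prod>i\<in>I. Wf k (x (i, i)))) = ?c / Zd n k x * (\<Sum>I\<in>?S. \<Prod>i\<in>I. Wf k (x (i, i)))"
    by (simp add: sum_distrib_left)
  also have "\<dots> \<le> Zd n k x / ?c"
  proof -
    have "?c / Zd n k x * (\<Sum>I\<in>?S. \<Prod>i\<in>I. Wf k (x (i, i))) = ((\<Sum>I\<in>?S. \<Prod>i\<in>I. Wf k (x (i, i))) * (?c * ?c)) / (Zd n k x * ?c)"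
      using Zp cp by (simp add: field_simps)
    also have "\<dots> \<le> (Zd n k x * Zd n k x) / (Zd n k x * ?c)"
      using e2 Zp cp by (intro divide_right_mono) auto
    also have "\<dots> = Zd n k x / ?c" using Zp by simp
    finally show ?thesis .
  qed
  finally show ?thesis .
qed

lemma main_bound:
  assumes k2: "2 \<le> k"
  shows "emeasure (PiM (entry_idx n) (\<lambda>_. dens_distr g)) {\<omega> \<in> space (PiM (entry_idx n) (\<lambda>_. dens_distr g)). \<not> L_max n \<omega> < k}
    \<le> ennreal (2 * (Vint k ^ n / sqrt 3 ^ k))"
proof -
  interpret prob_space "dens_distr g" by (rule prob_mu)
  let ?mu = "dens_distr g"
  let ?P = "PiM (entry_idx n) (\<lambda>_. ?mu)"
  let ?D = "PiM (Dg n) (\<lambda>_. ?mu)"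
  let ?S = "{I. I \<subseteq> {1..n} \<and> card I = k}"
  define c where "c = sqrt 3 ^ k"
  have cp: "0 < c" by (simp add: c_def)
  define B where "B = {\<omega> \<in> space ?P. \<not> L_max n \<omega> < k}"
  have good: "{\<omega> \<in> space ?P. L_max n \<omega> < k} \<in> sets ?P" by (rule sets_good) simp
  have BS: "B \<in> sets ?P"
  proof -
    have "B = space ?P - {\<omega> \<in> space ?P. L_max n \<omega> < k}" by (auto simp: B_def)
    then show ?thesis using good by auto
  qed
  have ZP[measurable]: "Zd n k \<in> borel_measurable ?P" by (rule Zd_meas_real) (simp add: entry_split)
  have ZD[measurable]: "Zd n k \<in> borel_measurable ?D" by (rule Zd_meas_real) simp
  define T where "T I \<omega> = (if KIf I \<omega> then ennreal (c / Zd n k \<omega>) else 0)" for I \<omega>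
  have TM: "T I \<in> borel_measurable ?P" if "I \<in> ?S" for I
    unfolding T_def[abs_def] using that by (intro measurable_If[OF _ _ KIf_sets]) auto
  have pw: "indicator B \<omega> \<le> ennreal (Zd n k \<omega> / c) + (\<Sum>I\<in>?S. T I \<omega>)" if w: "\<omega> \<in> space ?P" for \<omega>
  proof (cases "\<omega> \<in> B")
    case True
    then obtain I where I: "I \<subseteq> {1..n}" "card I = k" "KIf I \<omega>" using Lmax_ex[of k n \<omega>] by (auto simp: B_def)
    show ?thesis
    proof (cases "1 \<le> Zd n k \<omega> / c")
      case True
      then have "indicator B \<omega> \<le> ennreal (Zd n k \<omega> / c)" by (simp add: indicator_def)
      then show ?thesis by (simp add: add_increasing2)
    next
      case False
      then have "1 \<le> c / Zd n k \<omega>" using Zd_pos[of n k \<omega>] cp by (simp add: field_simps)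
      hence "indicator B \<omega> \<le> T I \<omega>" using I(3) by (simp add: T_def indicator_def)
      also have "T I \<omega> \<le> (\<Sum>I\<in>?S. T I \<omega>)" by (rule member_le_sum) (use I Sk_finite in auto)
      finally show ?thesis by (simp add: add_increasing)
    qed
  qed (simp add: B_def)
  have "emeasure ?P B = (\<integral>\<^sup>+\<omega>. indicator B \<omega> \<partial>?P)" using BS by simp
  also have "\<dots> \<le> (\<integral>\<^sup>+\<omega>. ennreal (Zd n k \<omega> / c) + (\<Sum>I\<in>?S. T I \<omega>) \<partial>?P)"
    by (rule nn_integral_mono) (rule pw)
  also have "\<dots> = (\<integral>\<^sup>+\<omega>. ennreal (Zd n k \<omega> / c) \<partial>?P) + (\<Sum>I\<in>?S. \<integral>\<^sup>+\<omega>. T I \<omega> \<partial>?P)"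
  proof (subst nn_integral_add)
    show "(\<lambda>\<omega>. ennreal (Zd n k \<omega> / c)) \<in> borel_measurable ?P" by measurable
    show "(\<lambda>\<omega>. \<Sum>I\<in>?S. T I \<omega>) \<in> borel_measurable ?P"
      by (rule borel_measurable_sum) (use TM in auto)
    show "(\<integral>\<^sup>+\<omega>. ennreal (Zd n k \<omega> / c) \<partial>?P) + (\<integral>\<^sup>+\<omega>. (\<Sum>I\<in>?S. T I \<omega>) \<partial>?P)
        = (\<integral>\<^sup>+\<omega>. ennreal (Zd n k \<omega> / c) \<partial>?P) + (\<Sum>I\<in>?S. \<integral>\<^sup>+\<omega>. T I \<omega> \<partial>?P)"
      by (subst nn_integral_sum) (use TM in auto)
  qed
  also have "(\<integral>\<^sup>+\<omega>. ennreal (Zd n k \<omega> / c) \<partial>?P) = ennreal (Vint k ^ n / c)"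
    unfolding c_def by (rule Zc_integral[OF _ finite_entry k2]) (simp add: entry_split)
  also have "(\<Sum>I\<in>?S. \<integral>\<^sup>+\<omega>. T I \<omega> \<partial>?P) \<le> (\<Sum>I\<in>?S. \<integral>\<^sup>+x. ennreal (c / Zd n k x * (\<Prod>i\<in>I. Wf k (x (i, i)))) \<partial>?D)"
  proof (rule sum_mono)
    fix I assume "I \<in> ?S"
    then show "(\<integral>\<^sup>+\<omega>. T I \<omega> \<partial>?P) \<le> (\<integral>\<^sup>+x. ennreal (c / Zd n k x * (\<Prod>i\<in>I. Wf k (x (i, i)))) \<partial>?D)"
      unfolding T_def[abs_def] c_def using KI_integral[of I n k] k2 by auto
  qed
  also have "(\<Sum>I\<in>?S. \<integral>\<^sup>+x. ennreal (c / Zd n k x * (\<Prod>i\<in>I. Wf k (x (i, i)))) \<partial>?D)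
      = (\<integral>\<^sup>+x. (\<Sum>I\<in>?S. ennreal (c / Zd n k x * (\<Prod>i\<in>I. Wf k (x (i, i))))) \<partial>?D)"
  proof (rule nn_integral_sum[symmetric])
    fix I assume I: "I \<in> ?S"
    have c: "(\<lambda>x. Wf k (x (i, i))) \<in> borel_measurable ?D" if "i \<in> I" for i
    proof (rule measurable_PiM_component_rev)
      show "(i, i) \<in> Dg n" using that I by (auto simp: Dg_def)
      show "Wf k \<in> borel_measurable ?mu" unfolding Wf_def[abs_def] by (rule meas_mu) measurable
    qed
    have [measurable]: "(\<lambda>x. \<Prod>i\<in>I. Wf k (x (i, i))) \<in> borel_measurable ?D"
      by (rule borel_measurable_prod) (use c in auto)
    show "(\<lambda>x. ennreal (c / Zd n k x * (\<Prod>i\<in>I. Wf k (x (i, i))))) \<in> borel_measurable ?D" by measurable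
  qed
  also have "\<dots> \<le> (\<integral>\<^sup>+x. ennreal (Zd n k x / c) \<partial>?D)"
  proof (rule nn_integral_mono)
    fix x
    have "(\<Sum>I\<in>?S. ennreal (c / Zd n k x * (\<Prod>i\<in>I. Wf k (x (i, i)))))
        = ennreal (\<Sum>I\<in>?S. c / Zd n k x * (\<Prod>i\<in>I. Wf k (x (i, i))))"
    proof (rule sum_ennreal)
      fix I show "0 \<le> c / Zd n k x * (\<Prod>i\<in>I. Wf k (x (i, i)))"
        using Zd_pos[of n k x] cp by (intro mult_nonneg_nonneg prod_nonneg) (auto simp: Wf_def)
    qed
    also have "\<dots> \<le> ennreal (Zd n k x / c)"
      unfolding c_def by (rule ennreal_leI[OF ek_pointwise[OF k2]])
    finally show "(\<Sum>I\<in>?S. ennreal (c / Zd n k x * (\<Prod>i\<in>I. Wf k (x (i, i))))) \<le> ennreal (Zd n k x / c)" .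
  qed
  also have "(\<integral>\<^sup>+x. ennreal (Zd n k x / c) \<partial>?D) = ennreal (Vint k ^ n / c)"
    unfolding c_def by (rule Zc_integral[OF _ finite_Dg k2]) simp
  finally have "emeasure ?P B \<le> ennreal (Vint k ^ n / c) + ennreal (Vint k ^ n / c)"
    by (simp add: add_left_mono)
  also have "\<dots> = ennreal (2 * (Vint k ^ n / c))"
    using Vint_ge1[OF k2] cp by (simp add: ennreal_plus[symmetric] del: ennreal_plus)
  finally show ?thesis unfolding B_def c_def .
qed

end

lemma asym_bound:
  fixes C \<beta> :: real and n k :: nat
  assumes C: "0 < C" and b: "0 \<le> \<beta>" and k2: "2 \<le> k" and kr: "C * sqrt (real n) < real k"
  shows "(1 + \<beta> / ((real k - 1) / 2)) ^ n / sqrt 3 ^ k \<le> exp (real k * (2 * \<beta> * real k / (C^2 * (real k - 1)) - ln 3 / 2))"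
proof -
  have k1: "0 < real k - 1" using k2 by simp
  have "(1 + \<beta> / ((real k - 1) / 2)) ^ n \<le> exp (\<beta> / ((real k - 1) / 2)) ^ n"
  proof (rule power_mono)
    show "1 + \<beta> / ((real k - 1) / 2) \<le> exp (\<beta> / ((real k - 1) / 2))" by (rule exp_ge_add_one_self)
    show "0 \<le> 1 + \<beta> / ((real k - 1) / 2)" using b k1 by simp
  qed
  also have "\<dots> = exp (real n * (2 * \<beta> / (real k - 1)))" by (simp add: exp_of_nat_mult[symmetric])
  also have "\<dots> \<le> exp (real k ^ 2 / C^2 * (2 * \<beta> / (real k - 1)))"
  proof -
    have "(C * sqrt (real n))^2 \<le> (real k)^2" using kr C by (intro power_mono) auto
    hence "C^2 * real n \<le> (real k)^2" by (simp add: power_mult_distrib)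
    hence "real n \<le> real k ^ 2 / C^2" using C by (simp add: field_simps)
    moreover have "0 \<le> 2 * \<beta> / (real k - 1)" using b k1 by simp
    ultimately have "real n * (2 * \<beta> / (real k - 1)) \<le> real k ^ 2 / C^2 * (2 * \<beta> / (real k - 1))"
      by (rule mult_right_mono)
    then show ?thesis by (simp only: exp_le_cancel_iff)
  qed
  finally have A: "(1 + \<beta> / ((real k - 1) / 2)) ^ n \<le> exp (real k ^ 2 / C^2 * (2 * \<beta> / (real k - 1)))" .
  have s3: "sqrt 3 ^ k = exp (real k * (ln 3 / 2))"
  proof -
    have "sqrt (3::real) = 3 powr (1/2)" by (simp add: powr_half_sqrt)
    also have "\<dots> = exp (ln 3 / 2)" by (simp add: powr_def)
    finally have e: "sqrt (3::real) = exp (ln 3 / 2)" .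
    show ?thesis unfolding e by (rule exp_of_nat_mult[symmetric])
  qed
  have "(1 + \<beta> / ((real k - 1) / 2)) ^ n / sqrt 3 ^ k \<le> exp (real k ^ 2 / C^2 * (2 * \<beta> / (real k - 1))) / exp (real k * (ln 3 / 2))"
    unfolding s3 by (rule divide_right_mono[OF A]) simp
  also have "\<dots> = exp (real k ^ 2 / C^2 * (2 * \<beta> / (real k - 1)) - real k * (ln 3 / 2))"
    by (simp add: exp_diff)
  also have "real k ^ 2 / C^2 * (2 * \<beta> / (real k - 1)) - real k * (ln 3 / 2)
      = real k * (2 * \<beta> * real k / (C^2 * (real k - 1)) - ln 3 / 2)"
    using C k1 by (simp add: field_simps power2_eq_square)
  finally show ?thesis .
qed

lemma eventually_rate:
  fixes C \<beta> :: real
  assumes C: "0 < C" and b: "0 \<le> \<beta>" and cb: "4 * \<beta> / ln 3 < C^2"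
  obtains \<eta> K where "0 < \<eta>" "\<And>k::nat. K \<le> k \<Longrightarrow> real k * (2 * \<beta> * real k / (C^2 * (real k - 1)) - ln 3 / 2) \<le> - \<eta> * real k"
proof -
  have l3: "0 < ln (3::real)" by simp
  define \<eta> where "\<eta> = (ln 3 / 2 - 2 * \<beta> / C^2) / 2"
  have "2 * \<beta> / C^2 < ln 3 / 2"
  proof -
    have "4 * \<beta> < C^2 * ln 3" using cb l3 by (simp add: field_simps)
    then show ?thesis using C by (simp add: field_simps)
  qed
  hence eta: "0 < \<eta>" by (simp add: \<eta>_def)
  define K where "K = nat \<lceil>2 + 2 * \<beta> / (C^2 * \<eta>)\<rceil>"
  show ?thesis
  proof (rule that[OF eta])
    fix k :: nat assume kK: "K \<le> k"
    have kb: "2 + 2 * \<beta> / (C^2 * \<eta>) \<le> real k" using kK unfolding K_def by linarith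
    have "0 \<le> 2 * \<beta> / (C^2 * \<eta>)" using b C eta by simp
    hence k1: "0 < real k - 1" using kb by linarith
    have "2 * \<beta> * real k / (C^2 * (real k - 1)) = 2 * \<beta> / C^2 + (2 * \<beta> / C^2) / (real k - 1)"
      using k1 C by (simp add: field_simps)
    also have "(2 * \<beta> / C^2) / (real k - 1) \<le> \<eta>"
    proof -
      have "2 * \<beta> / (C^2 * \<eta>) \<le> real k - 1" using kb by simp
      hence h: "2 * \<beta> / C^2 \<le> \<eta> * (real k - 1)" using eta C by (simp add: field_simps)
      show ?thesis unfolding pos_divide_le_eq[OF k1] by (rule h)
    qed
    finally have "2 * \<beta> * real k / (C^2 * (real k - 1)) - ln 3 / 2 \<le> 2 * \<beta> / C^2 + \<eta> - ln 3 / 2" by simp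
    also have "\<dots> = - \<eta>" by (simp add: \<eta>_def field_simps)
    finally have h: "2 * \<beta> * real k / (C^2 * (real k - 1)) - ln 3 / 2 \<le> - \<eta>" .
    have "real k * (2 * \<beta> * real k / (C^2 * (real k - 1)) - ln 3 / 2) \<le> real k * (- \<eta>)"
      by (rule mult_left_mono[OF h]) simp
    then show "real k * (2 * \<beta> * real k / (C^2 * (real k - 1)) - ln 3 / 2) \<le> - \<eta> * real k"
      by (simp add: mult.commute)
  qed
qed


theorem theorem2p7:
  fixes g :: "real \<Rightarrow> real" and \<delta> :: real
  assumes g_pos: "\<forall>x\<in>{0..1}. g x > 0"
    and g_noninc: "\<forall>x y. 0 \<le> x \<longrightarrow> x \<le> y \<longrightarrow> y \<le> 1 \<longrightarrow> g y \<le> g x"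
    and g_diff: "g differentiable_on {0..1}"
    and g_int: "g integrable_on {0..1}"
    and g_total: "integral {0..1} g = 1"
    and hazard: "\<forall>x y. 0 \<le> x \<longrightarrow> x \<le> y \<longrightarrow> y < 1 \<longrightarrow>
                   g x / (1 - cdf_of g x) \<le> g y / (1 - cdf_of g y)"
    and \<delta>_pos: "\<delta> > 0"
  shows "(\<lambda>n. measure (PiM (entry_idx n) (\<lambda>_. dens_distr g))
            {\<omega> \<in> space (PiM (entry_idx n) (\<lambda>_. dens_distr g)).
               real (L_max n \<omega>) \<le> (c_const + \<delta>) * sqrt (real n)})
         \<longlonglongrightarrow> 1"
proof -
  interpret D: dens g
    using g_pos g_noninc differentiable_imp_continuous_on[OF g_diff] g_total by unfold_locales auto
  define C where "C = c_const + \<delta>"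
  have C0: "0 < C" using c_pos \<delta>_pos by (simp add: C_def)
  have cb: "4 * beta_c / ln 3 < C^2"
  proof -
    have "c_const^2 < C^2" using c_pos \<delta>_pos by (intro power_strict_mono) (auto simp: C_def)
    then show ?thesis using c_bound by linarith
  qed
  have b0: "0 \<le> beta_c" unfolding beta_c_def using ln_le_minus_one[of "3/2"] by simp
  obtain \<eta> K where eta: "0 < \<eta>"
    and rate: "\<And>k::nat. K \<le> k \<Longrightarrow> real k * (2 * beta_c * real k / (C^2 * (real k - 1)) - ln 3 / 2) \<le> - \<eta> * real k"
    using eventually_rate[OF C0 b0 cb] by blast
  define kn where "kn n = nat \<lfloor>C * sqrt (real n)\<rfloor> + 1" for n
  let ?P = "\<lambda>n. PiM (entry_idx n) (\<lambda>_. dens_distr g)"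
  have prob: "prob_space (?P n)" for n by (rule prob_space_PiM) (use D.prob_mu in auto)
  have knr: "C * sqrt (real n) < real (kn n)" for n
  proof -
    have "0 \<le> C * sqrt (real n)" using C0 by simp
    then show ?thesis unfolding kn_def by linarith
  qed
  have set_eq: "{\<omega> \<in> space (?P n). real (L_max n \<omega>) \<le> C * sqrt (real n)} = {\<omega> \<in> space (?P n). L_max n \<omega> < kn n}" for n
  proof -
    have "real L \<le> C * sqrt (real n) \<longleftrightarrow> L < kn n" for L :: nat
    proof -
      have "0 \<le> C * sqrt (real n)" using C0 by simp
      then have "real L \<le> C * sqrt (real n) \<longleftrightarrow> int L \<le> \<lfloor>C * sqrt (real n)\<rfloor>" by (simp add: le_floor_iff)
      also have "\<dots> \<longleftrightarrow> L \<le> nat \<lfloor>C * sqrt (real n)\<rfloor>"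
        using \<open>0 \<le> C * sqrt (real n)\<close> by (simp add: le_nat_iff)
      also have "\<dots> \<longleftrightarrow> L < kn n" unfolding kn_def by linarith
      finally show ?thesis .
    qed
    then show ?thesis by auto
  qed
  define bad where "bad n = {\<omega> \<in> space (?P n). \<not> L_max n \<omega> < kn n}" for n
  have good_eq: "measure (?P n) {\<omega> \<in> space (?P n). L_max n \<omega> < kn n} = 1 - measure (?P n) (bad n)" for n
  proof -
    interpret prob_space "?P n" by (rule prob)
    have gs: "{\<omega> \<in> space (?P n). L_max n \<omega> < kn n} \<in> sets (?P n)" by (rule sets_good) simp
    have "bad n = space (?P n) - {\<omega> \<in> space (?P n). L_max n \<omega> < kn n}" by (auto simp: bad_def)
    hence "measure (?P n) (bad n) = 1 - measure (?P n) {\<omega> \<in> space (?P n). L_max n \<omega> < kn n}"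
      using prob_compl[OF gs] by simp
    then show ?thesis by simp
  qed
  define K' where "K' = max K 2"
  define N0 where "N0 = nat \<lceil>(real K' / C)^2\<rceil>"
  have kK: "K' \<le> kn n" if "N0 \<le> n" for n
  proof -
    have "(real K' / C)^2 \<le> real n" using that unfolding N0_def by linarith
    hence "sqrt ((real K' / C)^2) \<le> sqrt (real n)" by (rule real_sqrt_le_mono)
    hence "real K' / C \<le> sqrt (real n)" using C0 by simp
    hence "real K' \<le> C * sqrt (real n)" using C0 by (simp add: field_simps)
    then show ?thesis using knr[of n] by linarith
  qed
  have bound: "measure (?P n) (bad n) \<le> 2 * exp (- (\<eta> * (C * sqrt (real n))))" if n: "N0 \<le> n" for n
  proof -
    interpret prob_space "?P n" by (rule prob)
    define k where "k = kn n"
    have k2: "2 \<le> k" and kK0: "K \<le> k" using kK[OF n] by (auto simp: K'_def k_def)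
    have "ennreal (measure (?P n) (bad n)) \<le> ennreal (2 * (D.Vint k ^ n / sqrt 3 ^ k))"
      using D.main_bound[OF k2, of n] by (simp add: emeasure_eq_measure bad_def k_def)
    hence m1: "measure (?P n) (bad n) \<le> 2 * (D.Vint k ^ n / sqrt 3 ^ k)"
      using D.Vint_ge1[OF k2] by (simp add: ennreal_le_iff)
    have V: "D.Vint k \<le> 1 + beta_c / ((real k - 1) / 2)"
      using D.V_bound[of "D.aa k"] k2 unfolding D.Vint_def D.aa_def beta_c_def by simp
    have "D.Vint k ^ n \<le> (1 + beta_c / ((real k - 1) / 2)) ^ n"
      by (rule power_mono[OF V]) (use D.Vint_ge1[OF k2] in simp)
    hence "D.Vint k ^ n / sqrt 3 ^ k \<le> (1 + beta_c / ((real k - 1) / 2)) ^ n / sqrt 3 ^ k"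
      by (rule divide_right_mono) simp
    also have "\<dots> \<le> exp (real k * (2 * beta_c * real k / (C^2 * (real k - 1)) - ln 3 / 2))"
      by (rule asym_bound[OF C0 b0 k2]) (use knr[of n] in \<open>simp add: k_def\<close>)
    also have "\<dots> \<le> exp (- \<eta> * real k)" using rate[OF kK0] by simp
    also have "\<dots> \<le> exp (- (\<eta> * (C * sqrt (real n))))"
      using knr[of n] eta by (simp add: k_def)
    finally show ?thesis using m1 by linarith
  qed
  have lim0: "(\<lambda>n. 2 * exp (- (\<eta> * (C * sqrt (real n))))) \<longlonglongrightarrow> 0"
    using eta C0 by real_asymp
  have "(\<lambda>n. measure (?P n) (bad n)) \<longlonglongrightarrow> 0"
  proof (rule tendsto_sandwich[OF _ _ tendsto_const lim0])
    show "\<forall>\<^sub>F n in sequentially. 0 \<le> measure (?P n) (bad n)" by simp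
    show "\<forall>\<^sub>F n in sequentially. measure (?P n) (bad n) \<le> 2 * exp (- (\<eta> * (C * sqrt (real n))))"
      using bound by (auto simp: eventually_sequentially)
  qed
  hence "(\<lambda>n. 1 - measure (?P n) (bad n)) \<longlonglongrightarrow> 1 - 0" by (intro tendsto_diff tendsto_const)
  then show ?thesis unfolding C_def[symmetric] set_eq good_eq by simp
qed

end
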